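(* Let $d>0$ be square-free, $r$ a positive divisor of $d$, $s=-d/r$, and $u,v\in\mathbb{Z}$ with $us-vr=1$; set $\sigma_r=\begin{pmatrix}\sqrt{-d}&r\\ vr&u\sqrt{-d}\end{pmatrix}$. Let $m,c\in\mathbb{Z}$ with $0<m<d/2$ and $0<m^2-dc<d/4$, and $A=\begin{pmatrix}d&m\sqrt{-d}\\ -m\sqrt{-d}&dc\end{pmatrix}$. Then $\sigma_r^*A\sigma_r$ corresponds to an orientable embedded totally geodesic surface in $\Omega_d$.
   Context: $\mathcal{O}_d$ is the ring of integers of $\mathbb{Q}(\sqrt{-d})$, $\Gamma_d=\mathrm{PSL}(2,\mathcal{O}_d)$, $\Omega_d=\mathbb{H}^3/\Gamma_d$; $\sigma^*$ is conjugate transpose. A Hermitian matrix $A'$ corresponds to the totally geodesic surface in $\Omega_d$ that is the image of the hyperbolic plane $H$ bounded by the circle $\mathcal{C}=\{z:(z\ 1)A'(\bar z\ 1)^T=0\}$ (for $A'=\sigma_r^*A\sigma_r$ this circle is the image under the Möbius map $\sigma_r^{-1}$ of the circle of $A$). The surface is embedded if for all $\gamma\in\Gamma_d$, $\gamma H=H$ or $\gamma H\cap H=\emptyset$; it is orientable if no element of $\Gamma_d$ preserving $\mathcal{C}$ interchanges the two components of $(\mathbb{C}\cup\{\infty\})\setminus\mathcal{C}$. *)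

theory Defs
  imports "HOL-Analysis.Analysis" "HOL-Computational_Algebra.Squarefree"
begin

text \<open>2x2 complex matrices as complex^2^2 (row i, column j: M$i$j).\<close>

definition mat2 :: "complex \<Rightarrow> complex \<Rightarrow> complex \<Rightarrow> complex \<Rightarrow> complex^2^2" where
  "mat2 a b c e = (\<chi> i j. if i = 1 then (if j = 1 then a else b) else (if j = 1 then c else e))"

definition conj_transpose :: "complex^2^2 \<Rightarrow> complex^2^2" where
  "conj_transpose M = (\<chi> i j. cnj (M $ j $ i))"

definition hermitian2 :: "complex^2^2 \<Rightarrow> bool" where
  "hermitian2 M \<longleftrightarrow> conj_transpose M = M"

definition sqrt_neg :: "int \<Rightarrow> complex" where
  "sqrt_neg d = \<i> * complex_of_real (sqrt (real_of_int d))"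

definition ring_of_integers :: "int \<Rightarrow> complex set" where
  "ring_of_integers d =
     (if d mod 4 = 3
      then {of_int a + of_int b * (1 + sqrt_neg d) / 2 | a b :: int. True}
      else {of_int a + of_int b * sqrt_neg d | a b :: int. True})"

text \<open>Gamma_d = PSL(2,O_d).  We quantify over representatives in SL(2,O_d);
  g and -g act identically on the Riemann sphere and on H^3.\<close>
definition Gamma :: "int \<Rightarrow> (complex^2^2) set" where
  "Gamma d = {g. (\<forall>i j. g $ i $ j \<in> ring_of_integers d) \<and> det g = 1}"

text \<open>Riemann sphere C \<union> {\<infinity>} as complex option (None = \<infinity>), with homogeneous coordinates.\<close>
type_synonym riemann_sphere = "complex option"

definition hom :: "riemann_sphere \<Rightarrow> complex \<times> complex" where
  "hom P = (case P of None \<Rightarrow> (1, 0) | Some z \<Rightarrow> (z, 1))"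

definition dehom :: "complex \<times> complex \<Rightarrow> riemann_sphere" where
  "dehom pq = (if snd pq = 0 then None else Some (fst pq / snd pq))"

definition moebius :: "complex^2^2 \<Rightarrow> riemann_sphere \<Rightarrow> riemann_sphere" where
  "moebius g P = (let (p, q) = hom P in
     dehom (g$1$1 * p + g$1$2 * q, g$2$1 * p + g$2$2 * q))"

definition hform :: "complex^2^2 \<Rightarrow> complex \<times> complex \<Rightarrow> complex" where
  "hform A pq = (let (p, q) = pq in
     p * A$1$1 * cnj p + p * A$1$2 * cnj q + q * A$2$1 * cnj p + q * A$2$2 * cnj q)"

text \<open>The circle C of A in C \<union> {\<infinity>}: zero set of (z 1)A(conj z 1)^T (with \<infinity> included iff A11 = 0).\<close>
definition circle_of :: "complex^2^2 \<Rightarrow> riemann_sphere set" where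
  "circle_of A = {P. hform A (hom P) = 0}"

text \<open>The two components of (C \<union> {\<infinity>}) - C for a Hermitian A with det A < 0.\<close>
definition neg_side :: "complex^2^2 \<Rightarrow> riemann_sphere set" where
  "neg_side A = {P. Re (hform A (hom P)) < 0}"
definition pos_side :: "complex^2^2 \<Rightarrow> riemann_sphere set" where
  "pos_side A = {P. Re (hform A (hom P)) > 0}"

text \<open>A Hermitian matrix defines a genuine circle iff det A < 0.\<close>
definition circle_matrix :: "complex^2^2 \<Rightarrow> bool" where
  "circle_matrix A \<longleftrightarrow> hermitian2 A \<and> Re (det A) < 0"

definition H3 :: "(complex \<times> real) set" where
  "H3 = {(z, t). t > 0}"

definition poincare :: "complex^2^2 \<Rightarrow> complex \<times> real \<Rightarrow> complex \<times> real" where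
  "poincare g zt = (let (z, t) = zt; a = g$1$1; b = g$1$2; c = g$2$1; e = g$2$2;
       D = (cmod (c * z + e))\<^sup>2 + (cmod c)\<^sup>2 * t\<^sup>2 in
     (((a * z + b) * cnj (c * z + e) + a * cnj c * complex_of_real (t\<^sup>2)) / complex_of_real D, t / D))"

text \<open>Hyperbolic plane in H^3 bounded by the circle of A (hemisphere or vertical half-plane).\<close>
definition hplane :: "complex^2^2 \<Rightarrow> (complex \<times> real) set" where
  "hplane A = {(z, t). t > 0 \<and>
     Re (A$1$1) * ((cmod z)\<^sup>2 + t\<^sup>2) + 2 * Re (z * A$1$2) + Re (A$2$2) = 0}"

definition embedded_surface :: "int \<Rightarrow> complex^2^2 \<Rightarrow> bool" where
  "embedded_surface d A \<longleftrightarrow>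
     (\<forall>g \<in> Gamma d. poincare g ` hplane A = hplane A \<or> poincare g ` hplane A \<inter> hplane A = {})"

definition orientable_surface :: "int \<Rightarrow> complex^2^2 \<Rightarrow> bool" where
  "orientable_surface d A \<longleftrightarrow>
     \<not> (\<exists>g \<in> Gamma d. moebius g ` circle_of A = circle_of A \<and>
          moebius g ` neg_side A = pos_side A \<and> moebius g ` pos_side A = neg_side A)"

end

theory Submission
  imports Defs
begin


lemma mat2_nth[simp]:
  "mat2 a b c e $ 1 $ 1 = a" "mat2 a b c e $ 1 $ 2 = b"
  "mat2 a b c e $ 2 $ 1 = c" "mat2 a b c e $ 2 $ 2 = e"
  by (simp_all add: mat2_def)

lemma mat2_eta: "M = mat2 (M$1$1) (M$1$2) (M$2$1) (M$2$2)"
  by (simp add: mat2_def vec_eq_iff forall_2)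

lemma mat2_eq_iff: "mat2 a b c e = mat2 a' b' c' e' \<longleftrightarrow> a = a' \<and> b = b' \<and> c = c' \<and> e = e'"
  by (metis mat2_nth)

lemma mat2_mult: "mat2 a b c e ** mat2 a' b' c' e' =
   mat2 (a*a' + b*c') (a*b' + b*e') (c*a' + e*c') (c*b' + e*e')"
  by (simp add: mat2_def matrix_matrix_mult_def vec_eq_iff forall_2 sum_2)

lemma mat2_transpose: "transpose (mat2 a b c e) = mat2 a c b e"
  by (simp add: mat2_def transpose_def vec_eq_iff forall_2)

lemma mat2_conj_transpose: "conj_transpose (mat2 a b c e) = mat2 (cnj a) (cnj c) (cnj b) (cnj e)"
  by (simp add: mat2_def conj_transpose_def vec_eq_iff forall_2)

lemma mat2_det: "det (mat2 a b c e) = a*e - b*c"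
  by (simp add: det_2)



lemma w_sq: "d \<ge> 0 \<Longrightarrow> sqrt_neg d * sqrt_neg d = - of_int d"
  unfolding sqrt_neg_def
  by (simp add: algebra_simps flip: of_real_mult)

lemma w_sq2: "d \<ge> 0 \<Longrightarrow> sqrt_neg d * (sqrt_neg d * x) = - of_int d * x"
  by (simp add: mult.assoc[symmetric] w_sq)

lemma w_cnj[simp]: "cnj (sqrt_neg d) = - sqrt_neg d"
  by (simp add: sqrt_neg_def)

lemma w_Re[simp]: "Re (sqrt_neg d) = 0"
  by (simp add: sqrt_neg_def)

lemma w_Im[simp]: "Im (sqrt_neg d) = sqrt (real_of_int d)"
  by (simp add: sqrt_neg_def)

lemma O_cases:
  assumes "x \<in> ring_of_integers d"
  obtains a b :: int where "d mod 4 = 3" "x = of_int a + of_int b * (1 + sqrt_neg d) / 2"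
  | a b :: int where "d mod 4 \<noteq> 3" "x = of_int a + of_int b * sqrt_neg d"
  using assms unfolding ring_of_integers_def by (auto split: if_splits)

lemma O_I3: "d mod 4 = 3 \<Longrightarrow> x = of_int a + of_int b * (1 + sqrt_neg d) / 2 \<Longrightarrow> x \<in> ring_of_integers d"
  unfolding ring_of_integers_def by auto

lemma O_I: "d mod 4 \<noteq> 3 \<Longrightarrow> x = of_int a + of_int b * sqrt_neg d \<Longrightarrow> x \<in> ring_of_integers d"
  unfolding ring_of_integers_def by auto

lemma O_int[simp]: "of_int n \<in> ring_of_integers d"
  by (cases "d mod 4 = 3") (auto intro: O_I3[where a=n and b=0] O_I[where a=n and b=0])

lemma O_w[simp]: "sqrt_neg d \<in> ring_of_integers d"
proof (cases "d mod 4 = 3")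
  case True
  show ?thesis by (rule O_I3[OF True, where a="-1" and b=2]) (simp add: field_simps)
next
  case False
  show ?thesis by (rule O_I[OF False, where a=0 and b=1]) simp
qed

lemma O_add[simp]: "x \<in> ring_of_integers d \<Longrightarrow> y \<in> ring_of_integers d \<Longrightarrow> x + y \<in> ring_of_integers d"
proof (erule O_cases; erule O_cases)
  fix a b a' b' assume "d mod 4 = 3" "x = of_int a + of_int b * (1 + sqrt_neg d) / 2"
       "y = of_int a' + of_int b' * (1 + sqrt_neg d) / 2"
  then show ?thesis by (intro O_I3[where a="a+a'" and b="b+b'"]) (auto simp: field_simps)
next
  fix a b a' b' assume "d mod 4 \<noteq> 3" "x = of_int a + of_int b * sqrt_neg d"
       "y = of_int a' + of_int b' * sqrt_neg d"
  then show ?thesis by (intro O_I[where a="a+a'" and b="b+b'"]) (auto simp: field_simps)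
qed auto

lemma O_uminus[simp]: "x \<in> ring_of_integers d \<Longrightarrow> - x \<in> ring_of_integers d"
proof (erule O_cases)
  fix a b assume "d mod 4 = 3" "x = of_int a + of_int b * (1 + sqrt_neg d) / 2"
  then show ?thesis by (intro O_I3[where a="-a" and b="-b"]) (auto simp: field_simps)
next
  fix a b assume "d mod 4 \<noteq> 3" "x = of_int a + of_int b * sqrt_neg d"
  then show ?thesis by (intro O_I[where a="-a" and b="-b"]) (auto simp: field_simps)
qed

lemma O_diff[simp]: "x \<in> ring_of_integers d \<Longrightarrow> y \<in> ring_of_integers d \<Longrightarrow> x - y \<in> ring_of_integers d"
  using O_add[of x d "-y"] by simp

lemma O_mult[simp]:
  assumes d0: "d \<ge> 0" shows "x \<in> ring_of_integers d \<Longrightarrow> y \<in> ring_of_integers d \<Longrightarrow> x * y \<in> ring_of_integers d"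
proof (erule O_cases; erule O_cases)
  fix a b a' b' assume d3: "d mod 4 = 3" and xy: "x = of_int a + of_int b * (1 + sqrt_neg d) / 2"
       "y = of_int a' + of_int b' * (1 + sqrt_neg d) / 2"
  define e where "e = (d + 1) div 4"
  have e: "d + 1 = 4 * e" using d3 unfolding e_def by presburger
  have ee: "(of_int d :: complex) = 4 * of_int e - 1" using e
    by (metis add_diff_cancel_right' of_int_1 of_int_diff of_int_mult of_int_numeral)
  show ?thesis
    apply (intro O_I3[OF d3, where a="a*a' - b*b'*e" and b="a*b' + a'*b + b*b'"])
    apply (simp add: xy)
    apply (simp add: field_simps)
    using w_sq[OF d0] ee
    apply algebra
    done
next
  fix a b a' b' assume d3: "d mod 4 \<noteq> 3" and xy: "x = of_int a + of_int b * sqrt_neg d"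
       "y = of_int a' + of_int b' * sqrt_neg d"
  show ?thesis
    apply (intro O_I[OF d3, where a="a*a' - b*b'*d" and b="a*b' + a'*b"])
    apply (simp add: xy)
    using w_sq[OF d0]
    apply algebra
    done
qed auto

lemma O_cnj_form:
  assumes "x \<in> ring_of_integers d" shows "\<exists>n::int. cnj x = x - sqrt_neg d * of_int n"
  using assms
proof (cases rule: O_cases)
  case (1 a b) then show ?thesis unfolding 1(2) by (intro exI[of _ b]) (simp add: field_simps)
next
  case (2 a b) then show ?thesis unfolding 2(2) by (intro exI[of _ "2*b"]) (simp add: field_simps)
qed

lemma O_real_w:
  assumes d0: "d > 0" and x: "x \<in> ring_of_integers d" and im: "Im (sqrt_neg d * x) = 0"
  shows "\<exists>n::int. sqrt_neg d * x = of_int (d * n)"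
  using x
proof (cases rule: O_cases)
  case (1 a b)
  have sq: "sqrt (real_of_int d) > 0" using d0 by simp
  from im have "sqrt (real_of_int d) * (2 * a + b) = 0"
    by (simp add: 1 field_simps sqrt_neg_def)
  then have b: "b = - 2 * a" using sq by simp
  show ?thesis
    apply (intro exI[of _ a])
    using w_sq[of d] d0 unfolding 1 b by (simp add: field_simps) algebra
next
  case (2 a b)
  have sq: "sqrt (real_of_int d) > 0" using d0 by simp
  from im have "sqrt (real_of_int d) * a = 0"
    by (simp add: 2 field_simps sqrt_neg_def)
  then have b: "a = 0" using sq by simp
  show ?thesis
    apply (intro exI[of _ "-b"])
    using w_sq[of d] d0 unfolding 2 b by (simp add: field_simps) algebra
qed



definition cm :: "complex^2^2 \<Rightarrow> complex^2^2" where
  "cm M = (\<chi> i j. cnj (M $ i $ j))"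

definition tf :: "complex^2^2 \<Rightarrow> complex^2^2 \<Rightarrow> complex^2^2" where
  "tf g X = transpose g ** X ** cm g"

lemma mat2_cm: "cm (mat2 a b c e) = mat2 (cnj a) (cnj b) (cnj c) (cnj e)"
  by (simp add: mat2_def cm_def vec_eq_iff forall_2)

lemma tf_mat2: "tf (mat2 a b c e) (mat2 x11 x12 x21 x22) =
  mat2 (a*x11*cnj a + a*x12*cnj c + c*x21*cnj a + c*x22*cnj c)
       (a*x11*cnj b + a*x12*cnj e + c*x21*cnj b + c*x22*cnj e)
       (b*x11*cnj a + b*x12*cnj c + e*x21*cnj a + e*x22*cnj c)
       (b*x11*cnj b + b*x12*cnj e + e*x21*cnj b + e*x22*cnj e)"
  unfolding tf_def mat2_transpose mat2_cm mat2_mult mat2_eq_iff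
  by (intro conjI; algebra)

lemma hermitian2_mat2: "hermitian2 (mat2 a b c e) \<longleftrightarrow> cnj a = a \<and> cnj c = b \<and> cnj e = e"
  unfolding hermitian2_def mat2_conj_transpose mat2_eq_iff by auto

lemma herm_expr:
  assumes "cnj x11 = x11" "cnj x21 = x12" "cnj x22 = x22"
  shows "complex_of_real (Re x11 * ((cmod z)\<^sup>2 + t\<^sup>2) + 2 * Re (z * x12) + Re x22)
     = x11 * (z * cnj z + of_real (t\<^sup>2)) + z * x12 + cnj z * x21 + x22"
proof -
  have "Im x11 = 0" "Im x22 = 0" "x21 = cnj x12" using assms
    by (auto simp: complex_eq_iff)
  then show ?thesis
    by (simp add: complex_eq_iff cmod_power2) (simp add: power2_eq_square algebra_simps)
qed

lemma I1:
  fixes a b c e z \<tau> :: complex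
  assumes det: "a*e - b*c = 1" and tau: "cnj \<tau> = \<tau>"
  shows "((a*z+b)*cnj(c*z+e) + a*cnj c*\<tau>) * cnj ((a*z+b)*cnj(c*z+e) + a*cnj c*\<tau>) + \<tau>
       = ((c*z+e)*cnj(c*z+e) + c*cnj c*\<tau>) * ((a*z+b)*cnj(a*z+b) + a*cnj a*\<tau>)"
proof -
  have det': "cnj a * cnj e - cnj b * cnj c = 1" using det
    by (metis complex_cnj_diff complex_cnj_mult complex_cnj_one)
  have "((c*z+e)*cnj(c*z+e) + c*cnj c*\<tau>) * ((a*z+b)*cnj(a*z+b) + a*cnj a*\<tau>)
     - ((a*z+b)*cnj(c*z+e) + a*cnj c*\<tau>) * cnj ((a*z+b)*cnj(c*z+e) + a*cnj c*\<tau>)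
     = \<tau> * (a*e - b*c) * (cnj a * cnj e - cnj b * cnj c)"
    unfolding complex_cnj_mult complex_cnj_add complex_cnj_cnj tau by algebra
  then show ?thesis unfolding det det' by (simp add: diff_eq_eq)
qed

lemma tf_herm:
  assumes "cnj x11 = x11" "cnj x21 = x12" "cnj x22 = x22"
  shows "hermitian2 (tf (mat2 a b c e) (mat2 x11 x12 x21 x22))"
proof -
  have h: "cnj x12 = x21" using assms(2) by auto
  show ?thesis unfolding tf_mat2 hermitian2_mat2
    unfolding complex_cnj_mult complex_cnj_add complex_cnj_cnj assms h
    by (intro conjI; algebra)
qed

lemma poincare_mat2: "poincare (mat2 a b c e) (z,t) =
  (((a*z+b)*cnj(c*z+e) + a*cnj c * of_real(t\<^sup>2)) / of_real ((cmod (c*z+e))\<^sup>2 + (cmod c)\<^sup>2 * t\<^sup>2),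
   t / ((cmod (c*z+e))\<^sup>2 + (cmod c)\<^sup>2 * t\<^sup>2))"
  by (simp add: poincare_def Let_def)

lemma hplane_iff: "(z,t) \<in> hplane X \<longleftrightarrow> t > 0 \<and>
     Re (X$1$1) * ((cmod z)\<^sup>2 + t\<^sup>2) + 2 * Re (z * X$1$2) + Re (X$2$2) = 0"
  by (simp add: hplane_def)

lemma D_pos:
  assumes det: "a*e - b*c = 1" and t: "t > 0"
  shows "(cmod (c*z+e))\<^sup>2 + (cmod c)\<^sup>2 * t\<^sup>2 > 0"
proof (cases "c = 0")
  case True
  then have "e \<noteq> 0" using det by auto
  then show ?thesis using True by simp
next
  case False
  then have "(cmod c)\<^sup>2 * t\<^sup>2 > 0" using t by simp
  then show ?thesis by (smt (verit) zero_le_power2)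
qed

lemma G1:
  assumes det: "a*e - b*c = 1" and t: "t > 0"
    and herm: "cnj x11 = x11" "cnj x21 = x12" "cnj x22 = x22"
  shows "poincare (mat2 a b c e) (z,t) \<in> hplane (mat2 x11 x12 x21 x22) \<longleftrightarrow>
         (z,t) \<in> hplane (tf (mat2 a b c e) (mat2 x11 x12 x21 x22))"
proof -
  define \<alpha> where "\<alpha> = a*z+b"
  define \<gamma> where "\<gamma> = c*z+e"
  define D where "D = (cmod \<gamma>)\<^sup>2 + (cmod c)\<^sup>2 * t\<^sup>2"
  define \<tau> where "\<tau> = complex_of_real (t\<^sup>2)"
  define N where "N = \<alpha>*cnj \<gamma> + a*cnj c*\<tau>"
  have Dpos: "D > 0" unfolding D_def \<gamma>_def using D_pos[OF det t] .
  have P: "poincare (mat2 a b c e) (z,t) = (N / of_real D, t / D)"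
    unfolding poincare_mat2 N_def D_def \<alpha>_def \<gamma>_def \<tau>_def ..
  have tau: "cnj \<tau> = \<tau>" unfolding \<tau>_def by simp
  have D': "complex_of_real D = \<gamma>*cnj \<gamma> + c*cnj c*\<tau>"
    unfolding D_def \<tau>_def of_real_add of_real_mult complex_norm_square ..
  have I: "N * cnj N + \<tau> = of_real D * (\<alpha>*cnj \<alpha> + a*cnj a*\<tau>)"
    unfolding D' N_def \<alpha>_def \<gamma>_def using I1[OF det tau, of z] by simp
  have Dne: "complex_of_real D \<noteq> 0" using Dpos by simp
  define EXX where "EXX = x11 * ((N / of_real D) * cnj (N / of_real D) + of_real ((t/D)\<^sup>2))
      + (N / of_real D) * x12 + cnj (N / of_real D) * x21 + x22"
  obtain y11 y12 y21 y22 where Y: "tf (mat2 a b c e) (mat2 x11 x12 x21 x22) = mat2 y11 y12 y21 y22"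
    by (metis mat2_eta)
  have Yh: "cnj y11 = y11" "cnj y21 = y12" "cnj y22 = y22"
    using tf_herm[OF herm, of a b c e] unfolding Y hermitian2_mat2 by auto
  define EYY where "EYY = y11 * (z * cnj z + \<tau>) + z * y12 + cnj z * y21 + y22"
  have "of_real D * EXX = x11 * (N * cnj N + \<tau>) / of_real D + N * x12 + cnj N * x21 + x22 * of_real D"
    unfolding EXX_def \<tau>_def using Dne by (simp add: field_simps power2_eq_square)
  also have "\<dots> = x11 * (\<alpha>*cnj \<alpha> + a*cnj a*\<tau>) + N * x12 + cnj N * x21 + x22 * (\<gamma>*cnj \<gamma> + c*cnj c*\<tau>)"
    unfolding I D'[symmetric] using Dne by simp
  also have "\<dots> = EYY"
  proof -
    have "tf (mat2 a b c e) (mat2 x11 x12 x21 x22) $ 1 $ 1 = y11" "tf (mat2 a b c e) (mat2 x11 x12 x21 x22) $ 1 $ 2 = y12"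
      "tf (mat2 a b c e) (mat2 x11 x12 x21 x22) $ 2 $ 1 = y21" "tf (mat2 a b c e) (mat2 x11 x12 x21 x22) $ 2 $ 2 = y22"
      unfolding Y by simp_all
    then have yy: "y11 = a*x11*cnj a + a*x12*cnj c + c*x21*cnj a + c*x22*cnj c"
       "y12 = a*x11*cnj b + a*x12*cnj e + c*x21*cnj b + c*x22*cnj e"
       "y21 = b*x11*cnj a + b*x12*cnj c + e*x21*cnj a + e*x22*cnj c"
       "y22 = b*x11*cnj b + b*x12*cnj e + e*x21*cnj b + e*x22*cnj e"
      unfolding tf_mat2 by simp_all
    show ?thesis unfolding EYY_def yy N_def \<alpha>_def \<gamma>_def
      unfolding complex_cnj_mult complex_cnj_add complex_cnj_cnj tau by algebra
  qed
  finally have DE: "of_real D * EXX = EYY" .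
  have r1: "complex_of_real (Re x11 * ((cmod (N / of_real D))\<^sup>2 + (t/D)\<^sup>2) + 2 * Re ((N / of_real D) * x12) + Re x22) = EXX"
    unfolding EXX_def by (rule herm_expr[OF herm])
  have r2: "complex_of_real (Re y11 * ((cmod z)\<^sup>2 + t\<^sup>2) + 2 * Re (z * y12) + Re y22) = EYY"
    unfolding EYY_def \<tau>_def by (rule herm_expr[OF Yh])
  have "poincare (mat2 a b c e) (z,t) \<in> hplane (mat2 x11 x12 x21 x22) \<longleftrightarrow>
     (Re x11 * ((cmod (N / of_real D))\<^sup>2 + (t/D)\<^sup>2) + 2 * Re ((N / of_real D) * x12) + Re x22) = 0"
    unfolding P hplane_iff mat2_nth using Dpos t by simp
  also have "\<dots> \<longleftrightarrow> EXX = 0" unfolding r1[symmetric] of_real_eq_0_iff ..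
  also have "\<dots> \<longleftrightarrow> EYY = 0" using DE Dne by auto
  also have "\<dots> \<longleftrightarrow> (Re y11 * ((cmod z)\<^sup>2 + t\<^sup>2) + 2 * Re (z * y12) + Re y22) = 0"
    unfolding r2[symmetric] of_real_eq_0_iff ..
  also have "\<dots> \<longleftrightarrow> (z,t) \<in> hplane (tf (mat2 a b c e) (mat2 x11 x12 x21 x22))"
    unfolding Y hplane_iff mat2_nth using t by simp
  finally show ?thesis .
qed

lemma G1_pos:
  assumes det: "a*e - b*c = 1" and t: "t > 0"
  shows "snd (poincare (mat2 a b c e) (z,t)) > 0"
  unfolding poincare_mat2 using D_pos[OF det t] t by simp

definition smul :: "complex \<Rightarrow> complex^2^2 \<Rightarrow> complex^2^2" where
  "smul k M = mat2 (k * M$1$1) (k * M$1$2) (k * M$2$1) (k * M$2$2)"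

definition Qm :: "complex \<times> real \<Rightarrow> complex^2^2" where
  "Qm p = mat2 (of_real ((cmod (fst p))\<^sup>2 + (snd p)\<^sup>2)) (cnj (fst p)) (fst p) 1"

lemma smul_mult_left: "smul k A ** B = smul k (A ** B)"
  apply (subst (1 2) mat2_eta[of A]) apply (subst (1 2) mat2_eta[of B])
  unfolding smul_def mat2_mult mat2_nth mat2_eq_iff by (intro conjI; algebra)

lemma smul_mult_right: "A ** smul k B = smul k (A ** B)"
  apply (subst (1 2) mat2_eta[of A]) apply (subst (1 2) mat2_eta[of B])
  unfolding smul_def mat2_mult mat2_nth mat2_eq_iff by (intro conjI; algebra)

lemma QL:
  fixes z :: complex and t :: real
  assumes det: "a*e - b*c = 1" and t: "t > 0"
  defines "D \<equiv> (cmod (c*z+e))\<^sup>2 + (cmod c)\<^sup>2 * t\<^sup>2"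
  shows "cm (mat2 a b c e) ** Qm (z,t) ** transpose (mat2 a b c e) = smul (of_real D) (Qm (poincare (mat2 a b c e) (z,t)))"
proof -
  define \<alpha> where "\<alpha> = a*z+b"
  define \<gamma> where "\<gamma> = c*z+e"
  define \<tau> where "\<tau> = complex_of_real (t\<^sup>2)"
  define N where "N = \<alpha>*cnj \<gamma> + a*cnj c*\<tau>"
  have Dpos: "D > 0" unfolding D_def using D_pos[OF det t] .
  have P: "poincare (mat2 a b c e) (z,t) = (N / of_real D, t / D)"
    unfolding poincare_mat2 N_def D_def \<alpha>_def \<gamma>_def \<tau>_def ..
  have tau: "cnj \<tau> = \<tau>" unfolding \<tau>_def by simp
  have D': "complex_of_real D = \<gamma>*cnj \<gamma> + c*cnj c*\<tau>"
    unfolding D_def \<tau>_def \<gamma>_def of_real_add of_real_mult complex_norm_square ..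
  have I: "N * cnj N + \<tau> = of_real D * (\<alpha>*cnj \<alpha> + a*cnj a*\<tau>)"
    unfolding D' N_def \<alpha>_def \<gamma>_def using I1[OF det tau, of z] by simp
  have Dne: "complex_of_real D \<noteq> 0" using Dpos by simp
  have zz: "complex_of_real ((cmod z)\<^sup>2 + t\<^sup>2) = z * cnj z + \<tau>"
    unfolding \<tau>_def of_real_add complex_norm_square ..
  have e11: "of_real D * of_real ((cmod (N / of_real D))\<^sup>2 + (t / D)\<^sup>2) = \<alpha>*cnj \<alpha> + a*cnj a*\<tau>"
  proof -
    have "of_real D * of_real ((cmod (N / of_real D))\<^sup>2 + (t / D)\<^sup>2) = (N * cnj N + \<tau>) / of_real D"
      unfolding of_real_add complex_norm_square \<tau>_def using Dne
      by (simp add: field_simps power2_eq_square)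
    then show ?thesis unfolding I using Dne by simp
  qed
  have c1: "of_real D * cnj (N / of_real D) = cnj N" using Dne by simp
  have c2: "of_real D * (N / of_real D) = N" using Dne by simp
  show ?thesis
    unfolding P Qm_def fst_conv snd_conv smul_def mat2_nth mat2_cm mat2_transpose mat2_mult mat2_eq_iff e11 zz c1 c2
    apply (intro conjI)
    subgoal unfolding \<alpha>_def complex_cnj_mult complex_cnj_add by algebra
    subgoal unfolding N_def \<alpha>_def \<gamma>_def complex_cnj_mult complex_cnj_add complex_cnj_cnj tau by algebra
    subgoal unfolding N_def \<alpha>_def \<gamma>_def complex_cnj_mult complex_cnj_add complex_cnj_cnj tau by algebra
    subgoal unfolding D' \<gamma>_def complex_cnj_mult complex_cnj_add by algebra
    done
qed

lemma G3:
  assumes det: "a*e - b*c = 1" and t: "t > 0"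
  shows "poincare (mat2 a b c e) (poincare (mat2 e (-b) (-c) a) (z,t)) = (z,t)"
proof -
  have deth: "e*a - (-b)*(-c) = 1" using det by (simp add: algebra_simps)
  obtain z1 t1 where p1: "poincare (mat2 e (-b) (-c) a) (z,t) = (z1,t1)" by fastforce
  have t1: "t1 > 0" using G1_pos[OF deth t, of z] p1 by simp
  obtain z2 t2 where p2: "poincare (mat2 a b c e) (z1,t1) = (z2,t2)" by fastforce
  have t2: "t2 > 0" using G1_pos[OF det t1, of z1] p2 by simp
  define D1 where "D1 = (cmod ((-c)*z+a))\<^sup>2 + (cmod (-c))\<^sup>2 * t\<^sup>2"
  define D2 where "D2 = (cmod (c*z1+e))\<^sup>2 + (cmod c)\<^sup>2 * t1\<^sup>2"
  have Q1: "cm (mat2 e (-b) (-c) a) ** Qm (z,t) ** transpose (mat2 e (-b) (-c) a) = smul (of_real D1) (Qm (z1,t1))"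
    using QL[OF deth t, of z] p1 unfolding D1_def by simp
  have Q2: "cm (mat2 a b c e) ** Qm (z1,t1) ** transpose (mat2 a b c e) = smul (of_real D2) (Qm (z2,t2))"
    using QL[OF det t1, of z1] p2 unfolding D2_def by simp
  have det': "cnj a * cnj e - cnj b * cnj c = 1" using det
    by (metis complex_cnj_diff complex_cnj_mult complex_cnj_one)
  have I1: "cm (mat2 a b c e) ** cm (mat2 e (-b) (-c) a) = mat2 1 0 0 1"
    unfolding mat2_cm mat2_mult mat2_eq_iff complex_cnj_minus apply (intro conjI) using det' by algebra+
  have I2: "transpose (mat2 e (-b) (-c) a) ** transpose (mat2 a b c e) = mat2 1 0 0 1"
    unfolding mat2_transpose mat2_mult mat2_eq_iff apply (intro conjI) using det by algebra+
  have id1: "mat2 1 0 0 1 ** M = M" "M ** mat2 1 0 0 1 = M" for M :: "complex^2^2"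
    by (subst (1 2) mat2_eta[of M], simp add: mat2_mult)+
  have "Qm (z,t) = cm (mat2 a b c e) ** (cm (mat2 e (-b) (-c) a) ** Qm (z,t) ** transpose (mat2 e (-b) (-c) a)) ** transpose (mat2 a b c e)"
  proof -
    have assoc5: "A ** (B ** C ** D) ** E = (A ** B) ** C ** (D ** E)" for A B C D E :: "complex^2^2"
      by (simp add: matrix_mul_assoc)
    show ?thesis unfolding assoc5 I1 I2 id1 ..
  qed
  also have "\<dots> = smul (of_real D1) (smul (of_real D2) (Qm (z2,t2)))"
    unfolding Q1 smul_mult_left smul_mult_right Q2 ..
  finally have E: "Qm (z,t) = smul (of_real D1) (smul (of_real D2) (Qm (z2,t2)))" .
  have e22: "of_real D1 * of_real D2 = (1::complex)" using arg_cong[OF E, of "\<lambda>M. M$2$2"]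
    unfolding Qm_def smul_def by simp
  have e21: "z = z2" using arg_cong[OF E, of "\<lambda>M. M$2$1"] e22
    unfolding Qm_def smul_def by (simp add: mult.assoc[symmetric])
  have "complex_of_real ((cmod z)\<^sup>2 + t\<^sup>2) = of_real D1 * (of_real D2 * complex_of_real ((cmod z2)\<^sup>2 + t2\<^sup>2))"
    using arg_cong[OF E, of "\<lambda>M. M$1$1"] unfolding Qm_def smul_def mat2_nth fst_conv snd_conv .
  then have "complex_of_real ((cmod z)\<^sup>2 + t\<^sup>2) = complex_of_real ((cmod z2)\<^sup>2 + t2\<^sup>2)"
    using e22 by (simp only: mult.assoc[symmetric] mult_1)
  then have e11: "(cmod z)\<^sup>2 + t\<^sup>2 = (cmod z2)\<^sup>2 + t2\<^sup>2" by (simp only: of_real_eq_iff)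
  then have "t\<^sup>2 = t2\<^sup>2" using e21 by simp
  then have "t = t2" using t t2 by (simp add: power2_eq_iff)
  then show ?thesis using p1 p2 e21 by simp
qed


definition pairc :: "complex^2^2 \<Rightarrow> complex^2^2 \<Rightarrow> complex" where
  "pairc X Y = - (X$1$1 * Y$2$2 + X$2$2 * Y$1$1 - X$1$2 * Y$2$1 - X$2$1 * Y$1$2) / 2"

lemma herm_obtain:
  assumes "cnj x11 = x11" "cnj x21 = x12" "cnj x22 = x22"
  obtains a b1 b2 c where "x11 = of_real a" "x12 = Complex b1 b2" "x21 = Complex b1 (-b2)" "x22 = of_real c"
proof -
  have "x11 = of_real (Re x11)" "x22 = of_real (Re x22)" "x12 = Complex (Re x12) (Im x12)"
       "x21 = Complex (Re x12) (- Im x12)"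
    using assms by (auto simp: complex_eq_iff)
  then show ?thesis using that by blast
qed

lemma RL:
  fixes a b1 b2 c a' b1' b2' c' x y t :: real
  assumes hx: "a*(x^2+y^2+t^2) + 2*(x*b1 - y*b2) + c = 0"
      and hy: "a'*(x^2+y^2+t^2) + 2*(x*b1' - y*b2') + c' = 0"
  shows "b1^2+b2^2 - a*c = (b1+a*x)^2 + (b2-a*y)^2 + (t*a)^2"
    and "b1*b1' + b2*b2' - (a*c'+c*a')/2 = (b1+a*x)*(b1'+a'*x) + (b2-a*y)*(b2'-a'*y) + (t*a)*(t*a')"
proof -
  have c: "c = - a*(x^2+y^2+t^2) - 2*(x*b1 - y*b2)" using hx by linarith
  have c': "c' = - a'*(x^2+y^2+t^2) - 2*(x*b1' - y*b2')" using hy by linarith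
  show "b1^2+b2^2 - a*c = (b1+a*x)^2 + (b2-a*y)^2 + (t*a)^2" unfolding c by algebra
  show "b1*b1' + b2*b2' - (a*c'+c*a')/2 = (b1+a*x)*(b1'+a'*x) + (b2-a*y)*(b2'-a'*y) + (t*a)*(t*a')"
    unfolding c c' by (simp add: field_simps) algebra
qed

lemma cs3:
  fixes ua ub uc va vb vc :: real
  shows "(ua * va+ub * vb+uc * vc)^2 \<le> (ua^2+ub^2+uc^2)*(va^2+vb^2+vc^2)"
    and "(ua * va+ub * vb+uc * vc)^2 = (ua^2+ub^2+uc^2)*(va^2+vb^2+vc^2) \<Longrightarrow> ua^2+ub^2+uc^2 > 0 \<Longrightarrow>
         \<exists>l. va = l*ua \<and> vb = l*ub \<and> vc = l*uc"
proof -
  have L: "(ua^2+ub^2+uc^2)*(va^2+vb^2+vc^2) - (ua * va+ub * vb+uc * vc)^2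
     = (ua * vb-ub * va)^2 + (ua * vc-uc * va)^2 + (ub * vc-uc * vb)^2" by algebra
  show "(ua * va+ub * vb+uc * vc)^2 \<le> (ua^2+ub^2+uc^2)*(va^2+vb^2+vc^2)"
    using L by (smt (verit) zero_le_power2)
  assume eq: "(ua * va+ub * vb+uc * vc)^2 = (ua^2+ub^2+uc^2)*(va^2+vb^2+vc^2)" and pos: "ua^2+ub^2+uc^2 > 0"
  have "(ua * vb-ub * va)^2 + (ua * vc-uc * va)^2 + (ub * vc-uc * vb)^2 = 0" using L eq by simp
  then have z: "ua * vb-ub * va = 0" "ua * vc-uc * va = 0" "ub * vc-uc * vb = 0"
    by (smt (verit) zero_le_power2 power_eq_0_iff)+
  define n where "n = ua^2+ub^2+uc^2"
  define l where "l = (ua * va+ub * vb+uc * vc) / n"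
  have n0: "n \<noteq> 0" using pos n_def by simp
  have "va * n = ua * (ua * va+ub * vb+uc * vc)" "vb * n = ub * (ua * va+ub * vb+uc * vc)" "vc * n = uc * (ua * va+ub * vb+uc * vc)"
    unfolding n_def using z by algebra+
  then show "\<exists>l. va = l*ua \<and> vb = l*ub \<and> vc = l*uc"
    using n0 by (intro exI[of _ l]) (simp add: l_def field_simps)
qed


lemma G2:
  assumes hX: "cnj x11 = x11" "cnj x21 = x12" "cnj x22 = x22"
      and hY: "cnj y11 = y11" "cnj y21 = y12" "cnj y22 = y22"
      and inX: "(z,t) \<in> hplane (mat2 x11 x12 x21 x22)" and inY: "(z,t) \<in> hplane (mat2 y11 y12 y21 y22)"
  shows "(Re (pairc (mat2 x11 x12 x21 x22) (mat2 y11 y12 y21 y22)))\<^sup>2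
          \<le> Re (- det (mat2 x11 x12 x21 x22)) * Re (- det (mat2 y11 y12 y21 y22))" (is ?A)
    and "(Re (pairc (mat2 x11 x12 x21 x22) (mat2 y11 y12 y21 y22)))\<^sup>2
          = Re (- det (mat2 x11 x12 x21 x22)) * Re (- det (mat2 y11 y12 y21 y22)) \<Longrightarrow>
         Re (- det (mat2 x11 x12 x21 x22)) > 0 \<Longrightarrow>
         \<exists>l::real. mat2 y11 y12 y21 y22 = mat2 (of_real l * x11) (of_real l * x12) (of_real l * x21) (of_real l * x22)" (is "?E \<Longrightarrow> ?P \<Longrightarrow> ?C")
proof -
  obtain a b1 b2 c where X: "x11 = of_real a" "x12 = Complex b1 b2" "x21 = Complex b1 (-b2)" "x22 = of_real c"
    using herm_obtain[OF hX] .
  obtain a' b1' b2' c' where Y: "y11 = of_real a'" "y12 = Complex b1' b2'" "y21 = Complex b1' (-b2')" "y22 = of_real c'"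
    using herm_obtain[OF hY] .
  obtain x y where z: "z = Complex x y" by (metis complex.exhaust)
  have cm: "(cmod z)\<^sup>2 = x^2 + y^2" unfolding z cmod_power2 by simp
  have hx: "a*(x^2+y^2+t^2) + 2*(x*b1 - y*b2) + c = 0" and t: "t > 0"
    using inX unfolding hplane_iff mat2_nth X cm by (simp_all add: z algebra_simps)
  have hy: "a'*(x^2+y^2+t^2) + 2*(x*b1' - y*b2') + c' = 0"
    using inY unfolding hplane_iff mat2_nth Y cm by (simp_all add: z algebra_simps)
  have P: "Re (pairc (mat2 x11 x12 x21 x22) (mat2 y11 y12 y21 y22)) = b1*b1' + b2*b2' - (a*c'+c*a')/2"
    unfolding pairc_def mat2_nth X Y by (simp add: field_simps)
  have QX: "Re (- det (mat2 x11 x12 x21 x22)) = b1^2+b2^2 - a*c"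
    unfolding mat2_det X by (simp add: power2_eq_square)
  have QY: "Re (- det (mat2 y11 y12 y21 y22)) = b1'^2+b2'^2 - a'*c'"
    unfolding mat2_det Y by (simp add: power2_eq_square)
  note R1 = RL(1)[OF hx hy] RL(1)[OF hy hx] RL(2)[OF hx hy]
  show ?A unfolding P QX QY R1 by (rule cs3(1))
  assume E: ?E and pos: ?P
  obtain l where l: "b1'+a'*x = l*(b1+a*x)" "b2'-a'*y = l*(b2-a*y)" "t*a' = l*(t*a)"
    using cs3(2)[where ua="b1+a*x" and ub="b2-a*y" and uc="t*a" and va="b1'+a'*x" and vb="b2'-a'*y" and vc="t*a'"] E pos
    unfolding P QX QY R1 by blast
  have a': "a' = l*a" using l(3) t by (simp add: algebra_simps)
  have b1': "b1' = l*b1" using l(1) a' by (simp add: algebra_simps)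
  have b2': "b2' = l*b2" using l(2) a' by (simp add: algebra_simps)
  have c'e: "c' = - a'*(x^2+y^2+t^2) - 2*(x*b1' - y*b2')" using hy by linarith
  have ce: "c = - a*(x^2+y^2+t^2) - 2*(x*b1 - y*b2)" using hx by linarith
  have c': "c' = l*c" unfolding c'e ce a' b1' b2' by algebra
  show ?C
    by (intro exI[of _ l]) (simp add: mat2_eq_iff X Y a' b1' b2' c' complex_eq_iff)
qed


lemma cnj_eq_self_iff: "cnj x = x \<longleftrightarrow> x = of_real (Re x)"
  by (auto simp: complex_eq_iff)

lemma hform_expand: "hform X (p,q) = p*X$1$1*cnj p + p*X$1$2*cnj q + q*X$2$1*cnj p + q*X$2$2*cnj q"
  by (simp add: hform_def)

lemma hform_mat2: "hform (mat2 x11 x12 x21 x22) (p,q) = p*x11*cnj p + p*x12*cnj q + q*x21*cnj p + q*x22*cnj q"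
  by (simp add: hform_def)

lemma hform_tf: "hform (mat2 x11 x12 x21 x22) (a*p + b*q, c*p + e*q) = hform (tf (mat2 a b c e) (mat2 x11 x12 x21 x22)) (p,q)"
  unfolding hform_mat2 tf_mat2 complex_cnj_add complex_cnj_mult by algebra

lemma hform_scale: "hform X (k*p, k*q) = k * cnj k * hform X (p,q)"
  apply (subst (1 2) mat2_eta[of X]) unfolding hform_mat2 complex_cnj_mult by algebra

lemma hform_real:
  assumes "cnj x11 = x11" "cnj x21 = x12" "cnj x22 = x22"
  shows "hform (mat2 x11 x12 x21 x22) v = of_real (Re (hform (mat2 x11 x12 x21 x22) v))"
proof -
  obtain p q where v: "v = (p,q)" by fastforce
  have "cnj (hform (mat2 x11 x12 x21 x22) v) = hform (mat2 x11 x12 x21 x22) v"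
  proof -
    have h: "cnj x12 = x21" using assms(2) by auto
    show ?thesis unfolding v hform_mat2 complex_cnj_add complex_cnj_mult complex_cnj_cnj assms h by algebra
  qed
  then show ?thesis by (metis cnj_eq_self_iff)
qed

lemma hform_zero[simp]: "hform X (0,0) = 0"
  by (simp add: hform_def)

lemma hform_line:
  fixes s :: real
  shows "hform X (p1 + of_real s * p2, q1 + of_real s * q2) =
    hform X (p1,q1) + of_real s * (hform X (p1+p2, q1+q2) - hform X (p1,q1) - hform X (p2,q2))
      + of_real s * of_real s * hform X (p2,q2)"
  unfolding hform_expand complex_cnj_add complex_cnj_mult complex_cnj_complex_of_real by algebra

lemma quad_roots:
  fixes A B C :: real
  assumes "A * C < 0"
  obtains s1 s2 where "s1 \<noteq> s2" "s1 \<noteq> 0" "s2 \<noteq> 0" "C + B * s1 + A * s1 * s1 = 0" "C + B * s2 + A * s2 * s2 = 0"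
proof -
  have A: "A \<noteq> 0" and C: "C \<noteq> 0" using assms by auto
  define r where "r = sqrt (B*B - 4*A*C)"
  have "B*B \<ge> 0" by simp
  then have dpos: "B*B - 4*A*C > 0" using assms by linarith
  have r: "r > 0" "r*r = B*B - 4*A*C" using dpos unfolding r_def by (auto intro: real_sqrt_mult_self)
  define s1 where "s1 = (-B + r)/(2*A)"
  define s2 where "s2 = (-B - r)/(2*A)"
  have "4*A*(C + B * s1 + A * s1 * s1) = r*r - (B*B - 4*A*C)" unfolding s1_def using A
    by (simp add: field_simps power2_eq_square)
  then have e1: "C + B * s1 + A * s1 * s1 = 0" using r(2) A by simp
  have "4*A*(C + B * s2 + A * s2 * s2) = r*r - (B*B - 4*A*C)" unfolding s2_def using A
    by (simp add: field_simps power2_eq_square)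
  then have e2: "C + B * s2 + A * s2 * s2 = 0" using r(2) A by simp
  have "s1 \<noteq> s2" unfolding s1_def s2_def using A r(1) by (simp add: field_simps)
  moreover have "s1 \<noteq> 0" using e1 C by auto
  moreover have "s2 \<noteq> 0" using e2 C by auto
  ultimately show ?thesis using that e1 e2 by blast
qed

lemma LA:
  assumes hX: "cnj x11 = x11" "cnj x21 = x12" "cnj x22 = x22"
      and zero: "\<And>v. Re (hform (mat2 x11 x12 x21 x22) v) = 0 \<Longrightarrow> Re (hform Z v) = 0"
      and uv: "Re (hform (mat2 x11 x12 x21 x22) (p1,q1)) * Re (hform (mat2 x11 x12 x21 x22) (p2,q2)) < 0"
      and Zu: "Re (hform Z (p1,q1)) = 0"
  shows "Re (hform Z (p2,q2)) = 0"
proof -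
  let ?X = "mat2 x11 x12 x21 x22"
  define A where "A = Re (hform ?X (p2,q2))"
  define C where "C = Re (hform ?X (p1,q1))"
  define B where "B = Re (hform ?X (p1+p2, q1+q2) - hform ?X (p1,q1) - hform ?X (p2,q2))"
  define AZ where "AZ = Re (hform Z (p2,q2))"
  define BZ where "BZ = Re (hform Z (p1+p2, q1+q2) - hform Z (p1,q1) - hform Z (p2,q2))"
  have "A * C < 0" using uv unfolding A_def C_def by (simp add: mult.commute)
  then obtain s1 s2 where s: "s1 \<noteq> s2" "s1 \<noteq> 0" "s2 \<noteq> 0" "C + B * s1 + A * s1 * s1 = 0" "C + B * s2 + A * s2 * s2 = 0"
    by (rule quad_roots)
  have lineX: "Re (hform ?X (p1 + of_real s * p2, q1 + of_real s * q2)) = C + B * s + A * s * s" for s :: real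
    unfolding hform_line A_def B_def C_def by (simp add: algebra_simps)
  have lineZ: "Re (hform Z (p1 + of_real s * p2, q1 + of_real s * q2)) = BZ * s + AZ * s * s" for s :: real
    unfolding hform_line AZ_def BZ_def using Zu by (simp add: algebra_simps)
  have "BZ * s1 + AZ * s1 * s1 = 0" using zero[of "(p1 + of_real s1 * p2, q1 + of_real s1 * q2)"] lineX lineZ s(4) by simp
  then have "(BZ + AZ * s1) * s1 = 0" by (simp add: algebra_simps)
  then have z1: "BZ + AZ * s1 = 0" using s(2) by simp
  have "BZ * s2 + AZ * s2 * s2 = 0" using zero[of "(p1 + of_real s2 * p2, q1 + of_real s2 * q2)"] lineX lineZ s(5) by simp
  then have "(BZ + AZ * s2) * s2 = 0" by (simp add: algebra_simps)
  then have z2: "BZ + AZ * s2 = 0" using s(3) by simp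
  have "AZ * (s1 - s2) = (BZ + AZ * s1) - (BZ + AZ * s2)" by algebra
  then have "AZ * (s1 - s2) = 0" using z1 z2 by simp
  then have "AZ = 0" using s(1) by simp
  then show ?thesis unfolding AZ_def .
qed


lemma neg_exists:
  assumes h: "cnj x11 = x11" "cnj x21 = x12" "cnj x22 = x22"
      and dt: "Re (det (mat2 x11 x12 x21 x22)) < 0"
  shows "\<exists>p q. Re (hform (mat2 x11 x12 x21 x22) (p,q)) < 0"
proof -
  define a where "a = Re x11"
  define c where "c = Re x22"
  have x11: "x11 = of_real a" using h(1) unfolding a_def by (simp add: complex_eq_iff)
  have x22: "x22 = of_real c" using h(3) unfolding c_def by (simp add: complex_eq_iff)
  have x21: "x21 = cnj x12" using h(2) by auto
  have nb: "x12 * cnj x12 = of_real ((cmod x12)\<^sup>2)" by (rule complex_norm_square[symmetric])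
  have D: "a * c - (cmod x12)\<^sup>2 < 0" using dt unfolding mat2_det x11 x22 x21
    by (simp add: cmod_power2) (simp add: power2_eq_square)
  consider "a < 0" | "a > 0" | "a = 0" by linarith
  then show ?thesis
  proof cases
    case 1
    have "Re (hform (mat2 x11 x12 x21 x22) (1,0)) < 0" unfolding hform_mat2 x11 using 1 by simp
    then show ?thesis by blast
  next
    case 2
    define p where "p = - cnj x12 / of_real a"
    have "hform (mat2 x11 x12 x21 x22) (p,1) = of_real c - x12 * cnj x12 / of_real a"
      unfolding hform_mat2 x11 x22 x21 p_def using 2 by (simp add: field_simps)
    also have "\<dots> = of_real (c - (cmod x12)\<^sup>2 / a)" unfolding nb by simp
    finally have "Re (hform (mat2 x11 x12 x21 x22) (p,1)) = c - (cmod x12)\<^sup>2 / a" by simp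
    also have "\<dots> = (a * c - (cmod x12)\<^sup>2) / a" using 2 by (simp add: field_simps)
    also have "\<dots> < 0" using 2 D by (simp add: divide_neg_pos)
    finally show ?thesis by blast
  next
    case 3
    then have b: "x12 \<noteq> 0" using D by auto
    define p where "p = - (of_real c + 1) / (2 * x12)"
    have "hform (mat2 x11 x12 x21 x22) (p,1) = -1"
      unfolding hform_mat2 x11 x22 x21 p_def using 3 b by (simp add: field_simps)
    then have "Re (hform (mat2 x11 x12 x21 x22) (p,1)) < 0" by simp
    then show ?thesis by blast
  qed
qed

lemma pos_exists:
  assumes h: "cnj x11 = x11" "cnj x21 = x12" "cnj x22 = x22"
      and dt: "Re (det (mat2 x11 x12 x21 x22)) < 0"
  shows "\<exists>p q. Re (hform (mat2 x11 x12 x21 x22) (p,q)) > 0"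
proof -
  have h': "cnj (-x11) = -x11" "cnj (-x21) = -x12" "cnj (-x22) = -x22" using h by auto
  have "Re (det (mat2 (-x11) (-x12) (-x21) (-x22))) < 0" using dt unfolding mat2_det by simp
  then obtain p q where "Re (hform (mat2 (-x11) (-x12) (-x21) (-x22)) (p,q)) < 0"
    using neg_exists[OF h'] by blast
  moreover have "hform (mat2 (-x11) (-x12) (-x21) (-x22)) (p,q) = - hform (mat2 x11 x12 x21 x22) (p,q)"
    unfolding hform_mat2 by algebra
  ultimately show ?thesis by auto
qed

lemma FZ:
  assumes hX: "cnj x11 = x11" "cnj x21 = x12" "cnj x22 = x22"
      and dt: "Re (det (mat2 x11 x12 x21 x22)) < 0"
      and zero: "\<And>v. Re (hform (mat2 x11 x12 x21 x22) v) = 0 \<Longrightarrow> Re (hform Z v) = 0"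
      and v0: "Re (hform (mat2 x11 x12 x21 x22) (p0,q0)) < 0" "Re (hform Z (p0,q0)) = 0"
  shows "Re (hform Z v) = 0"
proof -
  let ?X = "mat2 x11 x12 x21 x22"
  obtain p1 q1 where v1: "Re (hform ?X (p1,q1)) > 0" using pos_exists[OF hX dt] by blast
  have z1: "Re (hform Z (p1,q1)) = 0"
    using LA[OF hX zero, of p0 q0 p1 q1] v0 v1 by (simp add: mult_neg_pos)
  obtain p q where v: "v = (p,q)" by fastforce
  consider "Re (hform ?X (p,q)) = 0" | "Re (hform ?X (p,q)) > 0" | "Re (hform ?X (p,q)) < 0" by linarith
  then show ?thesis
  proof cases
    case 1 then show ?thesis using zero v by simp
  next
    case 2 then show ?thesis using LA[OF hX zero, of p0 q0 p q] v0 v by (simp add: mult_neg_pos)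
  next
    case 3 then show ?thesis using LA[OF hX zero, of p1 q1 p q] v1 z1 v by (simp add: mult_pos_neg)
  qed
qed

lemma Z0:
  assumes hZ: "cnj z11 = z11" "cnj z21 = z12" "cnj z22 = z22"
      and all: "\<And>v. Re (hform (mat2 z11 z12 z21 z22) v) = 0"
  shows "z11 = 0 \<and> z12 = 0 \<and> z21 = 0 \<and> z22 = 0"
proof -
  have F: "hform (mat2 z11 z12 z21 z22) v = 0" for v
    using hform_real[OF hZ, of v] all[of v] by simp
  have a: "z11 = 0" using F[of "(1,0)"] unfolding hform_mat2 by simp
  have d: "z22 = 0" using F[of "(0,1)"] unfolding hform_mat2 by simp
  have s: "z12 + z21 = 0" using F[of "(1,1)"] a d unfolding hform_mat2 by simp
  have t: "\<i> * (z21 - z12) = 0" using F[of "(1,\<i>)"] a d unfolding hform_mat2 by (simp add: algebra_simps)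
  then have "z21 = z12" by simp
  then show ?thesis using a d s by auto
qed



lemma dehom_scale:
  assumes "(p,q) \<noteq> (0,0)"
  shows "\<exists>k. k \<noteq> 0 \<and> (p,q) = (k * fst (hom (dehom (p,q))), k * snd (hom (dehom (p,q))))"
proof (cases "q = 0")
  case True
  then have "p \<noteq> 0" using assms by auto
  then show ?thesis using True by (intro exI[of _ p]) (simp add: dehom_def hom_def)
next
  case False
  then show ?thesis by (intro exI[of _ q]) (simp add: dehom_def hom_def)
qed

lemma hom_nz: "hom P \<noteq> (0,0)"
  by (cases P) (auto simp: hom_def)

lemma kk: "Re (k * cnj k * w) = (cmod k)\<^sup>2 * Re w"
  by (simp add: complex_norm_square[symmetric] mult.commute)

lemma scale_hom:
  assumes "v \<noteq> (0,0)"
  shows "\<exists>k. k \<noteq> 0 \<and> (\<forall>Z. hform Z v = k * cnj k * hform Z (hom (dehom v)))"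
proof -
  obtain p q where v: "v = (p,q)" by fastforce
  obtain k where k: "k \<noteq> 0" "(p,q) = (k * fst (hom (dehom (p,q))), k * snd (hom (dehom (p,q))))"
    using dehom_scale assms v by blast
  have "hform Z v = k * cnj k * hform Z (hom (dehom v))" for Z
    using hform_scale[of Z k "fst (hom (dehom (p,q)))" "snd (hom (dehom (p,q)))"] k(2) v by simp
  then show ?thesis using k(1) by blast
qed

lemma moeb:
  assumes det: "a*e - b*c = 1"
  shows "\<exists>k. k \<noteq> 0 \<and> hform (tf (mat2 a b c e) X) (hom P) = k * cnj k * hform X (hom (moebius (mat2 a b c e) P))"
proof -
  obtain p q where pq: "hom P = (p,q)" by fastforce
  have nz: "(a*p + b*q, c*p + e*q) \<noteq> (0,0)"
  proof
    assume "(a*p + b*q, c*p + e*q) = (0,0)"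
    then have "a*p + b*q = 0" "c*p + e*q = 0" by auto
    moreover have "(a*e - b*c) * p = e*(a*p + b*q) - b*(c*p + e*q)" "(a*e - b*c) * q = a*(c*p + e*q) - c*(a*p + b*q)"
      by algebra+
    ultimately have "(a*e - b*c) * p = 0" "(a*e - b*c) * q = 0" by simp_all
    then have "p = 0" "q = 0" using det by auto
    then show False using hom_nz[of P] pq by simp
  qed
  obtain k where k: "k \<noteq> 0" "\<And>Z. hform Z (a*p + b*q, c*p + e*q) = k * cnj k * hform Z (hom (dehom (a*p + b*q, c*p + e*q)))"
    using scale_hom[OF nz] by blast
  have m: "moebius (mat2 a b c e) P = dehom (a*p + b*q, c*p + e*q)"
    by (simp add: moebius_def pq)
  have "hform (tf (mat2 a b c e) X) (hom P) = hform X (a*p + b*q, c*p + e*q)"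
    apply (subst (1 2) mat2_eta[of X]) unfolding pq hform_tf ..
  then show ?thesis using k m by auto
qed


lemma ORI:
  assumes hX: "cnj x11 = x11" "cnj x21 = x12" "cnj x22 = x22"
      and dt: "Re (det (mat2 x11 x12 x21 x22)) < 0"
      and det: "a*e - b*c = 1"
      and circ: "moebius (mat2 a b c e) ` circle_of (mat2 x11 x12 x21 x22) \<subseteq> circle_of (mat2 x11 x12 x21 x22)"
      and side: "moebius (mat2 a b c e) ` neg_side (mat2 x11 x12 x21 x22) \<subseteq> pos_side (mat2 x11 x12 x21 x22)"
  shows "\<exists>l::real. l < 0 \<and> tf (mat2 a b c e) (mat2 x11 x12 x21 x22) =
            mat2 (of_real l * x11) (of_real l * x12) (of_real l * x21) (of_real l * x22)"
proof -
  let ?g = "mat2 a b c e"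
  let ?X = "mat2 x11 x12 x21 x22"
  obtain y11 y12 y21 y22 where Y: "tf ?g ?X = mat2 y11 y12 y21 y22" by (metis mat2_eta)
  let ?Y = "mat2 y11 y12 y21 y22"
  have hY: "cnj y11 = y11" "cnj y21 = y12" "cnj y22 = y22"
    using tf_herm[OF hX, of a b c e] unfolding Y hermitian2_mat2 by auto
  have mP: "\<exists>k. k \<noteq> 0 \<and> hform ?Y (hom P) = k * cnj k * hform ?X (hom (moebius ?g P))" for P
    using moeb[OF det, of ?X P] unfolding Y .
  have zeroY: "Re (hform ?Y v) = 0" if "Re (hform ?X v) = 0" for v
  proof (cases "v = (0,0)")
    case True then show ?thesis by simp
  next
    case False
    obtain k where k: "k \<noteq> 0" "\<And>Z. hform Z v = k * cnj k * hform Z (hom (dehom v))"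
      using scale_hom[OF False] by blast
    have "hform ?X v = 0" using hform_real[OF hX, of v] that by simp
    then have "hform ?X (hom (dehom v)) = 0" using k by simp
    then have "dehom v \<in> circle_of ?X" unfolding circle_of_def by simp
    then have "moebius ?g (dehom v) \<in> circle_of ?X" using circ by blast
    then have "hform ?X (hom (moebius ?g (dehom v))) = 0" unfolding circle_of_def by simp
    then have "hform ?Y (hom (dehom v)) = 0" using mP[of "dehom v"] by auto
    then show ?thesis using k by simp
  qed
  obtain p q where pq: "Re (hform ?X (p,q)) < 0" using neg_exists[OF hX dt] by blast
  then have nz: "(p,q) \<noteq> (0,0)" by auto
  obtain k where k: "k \<noteq> 0" "\<And>Z. hform Z (p,q) = k * cnj k * hform Z (hom (dehom (p,q)))"
    using scale_hom[OF nz] by blast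
  define P0 where "P0 = dehom (p,q)"
  have kpos: "(cmod k)\<^sup>2 > 0" using k(1) by simp
  have e: "Re (hform ?X (p,q)) = (cmod k)\<^sup>2 * Re (hform ?X (hom P0))" unfolding P0_def k(2)[of ?X] kk ..
  have n0: "Re (hform ?X (hom P0)) < 0"
  proof (rule ccontr)
    assume "\<not> ?thesis"
    then have "(cmod k)\<^sup>2 * Re (hform ?X (hom P0)) \<ge> 0" using kpos by simp
    then show False using e pq by simp
  qed
  then have "P0 \<in> neg_side ?X" unfolding neg_side_def by simp
  then have "moebius ?g P0 \<in> pos_side ?X" using side by blast
  then have "Re (hform ?X (hom (moebius ?g P0))) > 0" unfolding pos_side_def by simp
  then have p0: "Re (hform ?Y (hom P0)) > 0" using mP[of P0] kk
    by (metis mult_pos_pos zero_less_norm_iff zero_less_power)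
  obtain p0 q0 where u0: "hom P0 = (p0,q0)" by fastforce
  define l where "l = Re (hform ?Y (hom P0)) / Re (hform ?X (hom P0))"
  have l: "l < 0" unfolding l_def using n0 p0 by (simp add: divide_pos_neg)
  let ?Z = "mat2 (y11 - of_real l * x11) (y12 - of_real l * x12) (y21 - of_real l * x21) (y22 - of_real l * x22)"
  have hZ: "cnj (y11 - of_real l * x11) = y11 - of_real l * x11" "cnj (y21 - of_real l * x21) = y12 - of_real l * x12"
    "cnj (y22 - of_real l * x22) = y22 - of_real l * x22" using hX hY by auto
  have FZ_eq: "hform ?Z v = hform ?Y v - of_real l * hform ?X v" for v
  proof -
    obtain p q where v: "v = (p,q)" by fastforce
    show ?thesis unfolding v hform_mat2 by algebra
  qed
  have ReZ: "Re (hform ?Z v) = Re (hform ?Y v) - l * Re (hform ?X v)" for v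
    unfolding FZ_eq by simp
  have zZ: "Re (hform ?Z v) = 0" if "Re (hform ?X v) = 0" for v
    using zeroY[OF that] that ReZ by simp
  have lz: "Re (hform ?Y (hom P0)) - l * Re (hform ?X (hom P0)) = 0" unfolding l_def using n0 by simp
  have z0: "Re (hform ?Z (p0,q0)) = 0" unfolding u0[symmetric] ReZ by (rule lz)
  have allZ: "Re (hform ?Z v) = 0" for v
    using FZ[OF hX dt zZ _ z0] n0 u0 by simp
  have "y11 - of_real l * x11 = 0 \<and> y12 - of_real l * x12 = 0 \<and> y21 - of_real l * x21 = 0 \<and> y22 - of_real l * x22 = 0"
    using Z0[OF hZ allZ] .
  then show ?thesis using l Y by (intro exI[of _ l]) (simp add: mat2_eq_iff)
qed


lemma tf_det: "det (tf (mat2 a b c e) (mat2 x11 x12 x21 x22)) = (a*e - b*c) * det (mat2 x11 x12 x21 x22) * cnj (a*e - b*c)"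
  unfolding tf_mat2 mat2_det complex_cnj_diff complex_cnj_mult by algebra

lemma pairc_scale: "pairc (mat2 x11 x12 x21 x22) (mat2 (l * x11) (l * x12) (l * x21) (l * x22)) = l * (- det (mat2 x11 x12 x21 x22))"
  unfolding pairc_def mat2_nth mat2_det by (simp add: field_simps)

lemma Gamma_mat2:
  assumes "g \<in> Gamma d"
  obtains a b c e where "g = mat2 a b c e" "a*e - b*c = 1"
    "a \<in> ring_of_integers d" "b \<in> ring_of_integers d" "c \<in> ring_of_integers d" "e \<in> ring_of_integers d"
proof -
  from assms have ent: "\<forall>i j. g$i$j \<in> ring_of_integers d" and dg: "det g = 1" by (auto simp: Gamma_def)
  have "g$1$1 * g$2$2 - g$1$2 * g$2$1 = 1" using dg by (simp add: det_2)
  then show ?thesis using that[OF mat2_eta] ent by blast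
qed

lemma Gamma_adj:
  assumes "mat2 a b c e \<in> Gamma d"
  shows "mat2 e (-b) (-c) a \<in> Gamma d"
proof -
  from assms have ent0: "\<forall>i j. mat2 a b c e $i$j \<in> ring_of_integers d" by (auto simp: Gamma_def)
  have ent: "a \<in> ring_of_integers d" "b \<in> ring_of_integers d" "c \<in> ring_of_integers d" "e \<in> ring_of_integers d"
    using ent0[rule_format, of 1 1] ent0[rule_format, of 1 2] ent0[rule_format, of 2 1] ent0[rule_format, of 2 2] by simp_all
  have "det (mat2 a b c e) = 1" using assms by (simp add: Gamma_def)
  then have "det (mat2 e (-b) (-c) a) = 1" unfolding mat2_det by (simp add: algebra_simps)
  moreover have "\<forall>i j. mat2 e (-b) (-c) a $ i $ j \<in> ring_of_integers d"
    using ent by (simp add: forall_2)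
  ultimately show ?thesis unfolding Gamma_def by simp
qed

definition keyprop :: "int \<Rightarrow> complex^2^2 \<Rightarrow> bool" where
  "keyprop d X \<longleftrightarrow> (\<forall>g \<in> Gamma d. \<not> (- Re (- det X) \<le> Re (pairc X (tf g X)) \<and> Re (pairc X (tf g X)) < Re (- det X)))"

lemma E1:
  assumes hX: "cnj x11 = x11" "cnj x21 = x12" "cnj x22 = x22"
      and dt: "Re (det (mat2 x11 x12 x21 x22)) < 0"
      and key: "keyprop d (mat2 x11 x12 x21 x22)"
      and g: "mat2 a b c e \<in> Gamma d"
      and p: "(z,t) \<in> hplane (mat2 x11 x12 x21 x22)"
      and gp: "poincare (mat2 a b c e) (z,t) \<in> hplane (mat2 x11 x12 x21 x22)"
  shows "tf (mat2 a b c e) (mat2 x11 x12 x21 x22) = mat2 x11 x12 x21 x22"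
proof -
  let ?X = "mat2 x11 x12 x21 x22"
  let ?g = "mat2 a b c e"
  have det: "a*e - b*c = 1" using g unfolding Gamma_def by (simp add: mat2_det)
  have t: "t > 0" using p by (simp add: hplane_def)
  obtain y11 y12 y21 y22 where Y: "tf ?g ?X = mat2 y11 y12 y21 y22" by (metis mat2_eta)
  let ?Y = "mat2 y11 y12 y21 y22"
  have hY: "cnj y11 = y11" "cnj y21 = y12" "cnj y22 = y22"
    using tf_herm[OF hX, of a b c e] unfolding Y hermitian2_mat2 by auto
  have pY: "(z,t) \<in> hplane ?Y" using G1[OF det t hX, of z] gp Y by simp
  have dY: "det ?Y = det ?X" using tf_det[of a b c e x11 x12 x21 x22] det Y by simp
  define P where "P = Re (pairc ?X ?Y)"
  define Q where "Q = Re (- det ?X)"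
  have Q: "Q > 0" using dt unfolding Q_def by simp
  have cs: "P\<^sup>2 \<le> Q * Q" using G2(1)[OF hX hY p pY] dY unfolding P_def Q_def by simp
  have k: "\<not> (- Q \<le> P \<and> P < Q)" using key g Y unfolding keyprop_def P_def Q_def by auto
  have "\<bar>P\<bar> \<le> \<bar>Q\<bar>" using cs unfolding abs_le_square_iff by (simp add: power2_eq_square)
  then have "\<bar>P\<bar> \<le> Q" using Q by simp
  then have PQ: "P = Q" using k by linarith
  then have "P\<^sup>2 = Q * Re (- det ?Y)" using dY by (simp add: power2_eq_square Q_def)
  then obtain l where l: "?Y = mat2 (of_real l * x11) (of_real l * x12) (of_real l * x21) (of_real l * x22)"
    using G2(2)[OF hX hY p pY] Q unfolding P_def Q_def by blast
  have "P = l * Q" unfolding P_def Q_def l pairc_scale by simp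
  then have "l = 1" using PQ Q by simp
  then show ?thesis using Y l by simp
qed

lemma EMB:
  assumes hX: "cnj x11 = x11" "cnj x21 = x12" "cnj x22 = x22"
      and dt: "Re (det (mat2 x11 x12 x21 x22)) < 0"
      and key: "keyprop d (mat2 x11 x12 x21 x22)"
  shows "embedded_surface d (mat2 x11 x12 x21 x22)"
  unfolding embedded_surface_def
proof
  fix g assume gG: "g \<in> Gamma d"
  let ?X = "mat2 x11 x12 x21 x22"
  obtain a b c e where g: "g = mat2 a b c e" and det: "a*e - b*c = 1" using Gamma_mat2[OF gG] by metis
  have gG': "mat2 a b c e \<in> Gamma d" using gG g by simp
  let ?h = "mat2 e (-b) (-c) a"
  have hG: "?h \<in> Gamma d" using Gamma_adj[OF gG'] .
  have deth: "e*a - (-b)*(-c) = 1" using det by (simp add: algebra_simps)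
  show "poincare g ` hplane ?X = hplane ?X \<or> poincare g ` hplane ?X \<inter> hplane ?X = {}"
  proof (cases "poincare g ` hplane ?X \<inter> hplane ?X = {}")
    case True then show ?thesis by simp
  next
    case False
    then obtain z t where p: "(z,t) \<in> hplane ?X" and gp: "poincare g (z,t) \<in> hplane ?X" by auto
    have t: "t > 0" using p by (simp add: hplane_def)
    have tfg: "tf (mat2 a b c e) ?X = ?X" using E1[OF hX dt key gG' p] gp g by simp
    obtain z1 t1 where p1: "poincare g (z,t) = (z1,t1)" by fastforce
    have t1: "t1 > 0" using gp p1 by (simp add: hplane_def)
    have bk: "poincare ?h (z1,t1) = (z,t)"
      using G3[OF deth t, of z] p1 g by simp
    have tfh: "tf ?h ?X = ?X" using E1[OF hX dt key hG, of z1 t1] gp p1 bk p by simp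
    have "poincare g ` hplane ?X = hplane ?X"
    proof
      show "poincare g ` hplane ?X \<subseteq> hplane ?X"
      proof
        fix q assume "q \<in> poincare g ` hplane ?X"
        then obtain z' t' where q: "q = poincare g (z',t')" "(z',t') \<in> hplane ?X" by auto
        have "t' > 0" using q(2) by (simp add: hplane_def)
        then show "q \<in> hplane ?X" using G1[OF det _ hX, of t' z'] q tfg g by simp
      qed
    next
      show "hplane ?X \<subseteq> poincare g ` hplane ?X"
      proof
        fix q assume q: "q \<in> hplane ?X"
        obtain z' t' where qq: "q = (z',t')" by fastforce
        have t': "t' > 0" using q qq by (simp add: hplane_def)
        have "poincare ?h (z',t') \<in> hplane ?X" using G1[OF deth t' hX, of z'] q qq tfh by simp
        moreover have "poincare g (poincare ?h (z',t')) = (z',t')" using G3[OF det t', of z'] g by simp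
        ultimately show "q \<in> poincare g ` hplane ?X" using qq by (metis image_eqI)
      qed
    qed
    then show ?thesis by simp
  qed
qed

lemma ORIENT:
  assumes hX: "cnj x11 = x11" "cnj x21 = x12" "cnj x22 = x22"
      and dt: "Re (det (mat2 x11 x12 x21 x22)) < 0"
      and key: "keyprop d (mat2 x11 x12 x21 x22)"
  shows "orientable_surface d (mat2 x11 x12 x21 x22)"
  unfolding orientable_surface_def
proof
  let ?X = "mat2 x11 x12 x21 x22"
  assume "\<exists>g\<in>Gamma d. moebius g ` circle_of ?X = circle_of ?X \<and> moebius g ` neg_side ?X = pos_side ?X \<and> moebius g ` pos_side ?X = neg_side ?X"
  then obtain g where gG: "g \<in> Gamma d" and c1: "moebius g ` circle_of ?X = circle_of ?X"
    and c2: "moebius g ` neg_side ?X = pos_side ?X" by blast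
  obtain a b c e where g: "g = mat2 a b c e" and det: "a*e - b*c = 1" using Gamma_mat2[OF gG] by metis
  obtain l where l: "l < 0" "tf (mat2 a b c e) ?X = mat2 (of_real l * x11) (of_real l * x12) (of_real l * x21) (of_real l * x22)"
    using ORI[OF hX dt det] c1 c2 g by auto
  have "det (mat2 (of_real l * x11) (of_real l * x12) (of_real l * x21) (of_real l * x22)) = det ?X"
    using tf_det[of a b c e x11 x12 x21 x22] det l(2) by simp
  then have "of_real (l*l) * det ?X = det ?X" unfolding mat2_det by (simp add: algebra_simps)
  moreover have "det ?X \<noteq> 0" using dt by auto
  ultimately have "complex_of_real (l*l) = 1" by simp
  then have "l * l = 1" using of_real_eq_1_iff by blast
  then have "(l - 1) * (l + 1) = 0" by algebra
  then have lm: "l = -1" using l(1) by auto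
  define Q where "Q = Re (- det ?X)"
  have Q: "Q > 0" using dt unfolding Q_def by simp
  have "Re (pairc ?X (tf g ?X)) = - Q" unfolding g l(2) pairc_scale Q_def lm by simp
  then show False using key gG Q unfolding keyprop_def Q_def by fastforce
qed



lemma ident:
  fixes a b c e w n11 n12 n21 n22 A1 A2 B R :: complex
  assumes det: "a*e - b*c = 1"
  defines "D \<equiv> - (w*w)"
  defines "x11 \<equiv> D*R*A1" and "x12 \<equiv> R*B*w" and "x21 \<equiv> - (R*B*w)" and "x22 \<equiv> D*R*A2"
  defines "ca \<equiv> a - w*n11" and "cb \<equiv> b - w*n12" and "cc \<equiv> c - w*n21" and "ce \<equiv> e - w*n22"
  defines "M11 \<equiv> A1*a*a + A2*c*c - w*(A1*a*n11 + A2*c*n21) + B*(a*n21 - c*n11)"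
      and "M12 \<equiv> A1*a*b + A2*c*e - w*(A1*a*n12 + A2*c*n22) + B*(a*n22 - c*n12)"
      and "M21 \<equiv> A1*b*a + A2*e*c - w*(A1*b*n11 + A2*e*n21) + B*(b*n21 - e*n11)"
      and "M22 \<equiv> A1*b*b + A2*e*e - w*(A1*b*n12 + A2*e*n22) + B*(b*n22 - e*n12)"
  defines "Z \<equiv> - w*(A1*M22 + A2*M11) + B*(M12 - M21)"
  shows "- (x11 * (b*x11*cb + b*x12*ce + e*x21*cb + e*x22*ce) + x22 * (a*x11*ca + a*x12*cc + c*x21*ca + c*x22*cc)
           - x12 * (b*x11*ca + b*x12*cc + e*x21*ca + e*x22*cc) - x21 * (a*x11*cb + a*x12*ce + c*x21*cb + c*x22*ce))
         = R*R*D*(2*(B*B - D*A1*A2) + 2*D*A1*A2 - w*Z)"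
  using det unfolding D_def x11_def x12_def x21_def x22_def ca_def cb_def cc_def ce_def M11_def M12_def M21_def M22_def Z_def
  by algebra


lemma ident2:
  fixes a b c e w n11 n12 n21 n22 A1 A2 B R :: complex
  assumes det: "a*e - b*c = 1"
    and cn: "cnj a = a - w*n11" "cnj b = b - w*n12" "cnj c = c - w*n21" "cnj e = e - w*n22"
  defines "M11 \<equiv> A1*a*a + A2*c*c - w*(A1*a*n11 + A2*c*n21) + B*(a*n21 - c*n11)"
      and "M12 \<equiv> A1*a*b + A2*c*e - w*(A1*a*n12 + A2*c*n22) + B*(a*n22 - c*n12)"
      and "M21 \<equiv> A1*b*a + A2*e*c - w*(A1*b*n11 + A2*e*n21) + B*(b*n21 - e*n11)"
      and "M22 \<equiv> A1*b*b + A2*e*e - w*(A1*b*n12 + A2*e*n22) + B*(b*n22 - e*n12)"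
  defines "Z \<equiv> - w*(A1*M22 + A2*M11) + B*(M12 - M21)"
  shows "2 * pairc (mat2 (-(w*w)*R*A1) (R*B*w) (-(R*B*w)) (-(w*w)*R*A2)) (tf (mat2 a b c e) (mat2 (-(w*w)*R*A1) (R*B*w) (-(R*B*w)) (-(w*w)*R*A2)))
         = R*R*(-(w*w))*(2*(B*B - (-(w*w))*A1*A2) + 2*(-(w*w))*A1*A2 - w*Z)"
proof -
  have two: "2 * (- x / 2) = - (x::complex)" for x by simp
  show ?thesis
    unfolding pairc_def tf_mat2 mat2_nth cn two M11_def M12_def M21_def M22_def Z_def
    using det by algebra
qed

lemma pairc_real:
  assumes "cnj x11 = x11" "cnj x21 = x12" "cnj x22 = x22" "cnj y11 = y11" "cnj y21 = y12" "cnj y22 = y22"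
  shows "Im (pairc (mat2 x11 x12 x21 x22) (mat2 y11 y12 y21 y22)) = 0"
proof -
  have h: "cnj x12 = x21" "cnj y12 = y21" using assms by auto
  have "cnj (pairc (mat2 x11 x12 x21 x22) (mat2 y11 y12 y21 y22)) = pairc (mat2 x11 x12 x21 x22) (mat2 y11 y12 y21 y22)"
    unfolding pairc_def mat2_nth complex_cnj_divide complex_cnj_minus complex_cnj_diff complex_cnj_add complex_cnj_mult assms h
      complex_cnj_numeral
    by algebra
  then show ?thesis by (simp add: complex_eq_iff)
qed

lemma int_arith:
  fixes C k m d :: int
  assumes "C > 0" "k > 0" "4*k < d" "- (C*k) * 2 \<le> C*(2*k + d*m)" "C*(2*k + d*m) < C*k*2"
  shows False
proof -
  have "C * (-(2*k)) \<le> C * (2*k + d*m)" using assms(4) by (simp add: algebra_simps)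
  then have "-(2*k) \<le> 2*k + d*m" using assms(1) by (simp only: mult_le_cancel_left_pos)
  moreover have "C * (2*k + d*m) < C * (2*k)" using assms(5) by (simp add: algebra_simps)
  then have "2*k + d*m < 2*k" using assms(1) by (simp only: mult_less_cancel_left_pos)
  ultimately have m: "d*m < 0" "-(4*k) \<le> d*m" by linarith+
  have "d > 0" using assms by linarith
  then have "m < 0" using m(1) by (simp add: mult_less_0_iff)
  then have "m \<le> -1" by simp
  then have "d*m \<le> d*(-1)" using \<open>d > 0\<close> by (intro mult_left_mono) auto
  then have "d*m \<le> -d" by simp
  then show False using m(2) assms(3) by linarith
qed

lemma KEY:
  fixes d r a1 a2 B :: int
  assumes d0: "d > 0" and r0: "r \<noteq> 0"
      and k0: "B^2 - d*a1*a2 > 0" and kd: "4*(B^2 - d*a1*a2) < d"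
  shows "keyprop d (mat2 (of_int (d*r*a1)) (of_int (r*B) * sqrt_neg d) (- (of_int (r*B) * sqrt_neg d)) (of_int (d*r*a2)))"
  unfolding keyprop_def
proof
  fix g assume gG: "g \<in> Gamma d"
  define w where "w = sqrt_neg d"
  define k where "k = B^2 - d*a1*a2"
  let ?X = "mat2 (of_int (d*r*a1)) (of_int (r*B) * sqrt_neg d) (- (of_int (r*B) * sqrt_neg d)) (of_int (d*r*a2))"
  obtain a b c e where g: "g = mat2 a b c e" and det: "a*e - b*c = 1"
    and O: "a \<in> ring_of_integers d" "b \<in> ring_of_integers d" "c \<in> ring_of_integers d" "e \<in> ring_of_integers d"
    by (rule Gamma_mat2[OF gG])
  obtain n11 where n11: "cnj a = a - w * of_int n11" using O_cnj_form[OF O(1)] unfolding w_def by blast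
  obtain n12 where n12: "cnj b = b - w * of_int n12" using O_cnj_form[OF O(2)] unfolding w_def by blast
  obtain n21 where n21: "cnj c = c - w * of_int n21" using O_cnj_form[OF O(3)] unfolding w_def by blast
  obtain n22 where n22: "cnj e = e - w * of_int n22" using O_cnj_form[OF O(4)] unfolding w_def by blast
  have ww: "w * w = - of_int d" unfolding w_def using w_sq d0 by simp
  have D: "(of_int d :: complex) = - (w*w)" using ww by simp
  define A1 where "A1 = (of_int a1 :: complex)"
  define A2 where "A2 = (of_int a2 :: complex)"
  define BB where "BB = (of_int B :: complex)"
  define R where "R = (of_int r :: complex)"
  define M11 where "M11 = A1*a*a + A2*c*c - w*(A1*a * of_int n11 + A2*c * of_int n21) + BB*(a * of_int n21 - c * of_int n11)"
  define M12 where "M12 = A1*a*b + A2*c*e - w*(A1*a * of_int n12 + A2*c * of_int n22) + BB*(a * of_int n22 - c * of_int n12)"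
  define M21 where "M21 = A1*b*a + A2*e*c - w*(A1*b * of_int n11 + A2*e * of_int n21) + BB*(b * of_int n21 - e * of_int n11)"
  define M22 where "M22 = A1*b*b + A2*e*e - w*(A1*b * of_int n12 + A2*e * of_int n22) + BB*(b * of_int n22 - e * of_int n12)"
  define Z where "Z = - w*(A1*M22 + A2*M11) + BB*(M12 - M21)"
  have d00: "d \<ge> 0" using d0 by simp
  note Om = O_mult[OF d00]
  have wO: "w \<in> ring_of_integers d" unfolding w_def by simp
  have ZO: "Z \<in> ring_of_integers d"
    unfolding Z_def M11_def M12_def M21_def M22_def A1_def A2_def BB_def
    by (intro O_add O_diff Om O_uminus O_int wO O)
  have X: "?X = mat2 (-(w*w)*R*A1) (R*BB*w) (-(R*BB*w)) (-(w*w)*R*A2)"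
    unfolding R_def A1_def A2_def BB_def w_def by (simp add: mult.assoc w_sq2[OF d00])
  have id: "2 * pairc ?X (tf g ?X) = R*R*(-(w*w))*(2*(BB*BB - (-(w*w))*A1*A2) + 2*(-(w*w))*A1*A2 - w*Z)"
    unfolding X g Z_def M11_def M12_def M21_def M22_def
    by (rule ident2[OF det n11 n12 n21 n22])
  have hX: "cnj (of_int (d*r*a1)) = (of_int (d*r*a1) :: complex)" "cnj (- (of_int (r*B) * sqrt_neg d)) = of_int (r*B) * sqrt_neg d"
     "cnj (of_int (d*r*a2)) = (of_int (d*r*a2) :: complex)" by simp_all
  obtain y11 y12 y21 y22 where Y: "tf g ?X = mat2 y11 y12 y21 y22" by (metis mat2_eta)
  have hY: "cnj y11 = y11" "cnj y21 = y12" "cnj y22 = y22"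
    using tf_herm[OF hX, of a b c e] unfolding Y[unfolded g] hermitian2_mat2 by auto
  have im: "Im (pairc ?X (tf g ?X)) = 0" unfolding Y by (rule pairc_real[OF hX hY])
  have RD: "R*R*(-(w*w)) \<noteq> 0" unfolding R_def ww using r0 d0 by simp
  have "w*Z = 2*(BB*BB - (-(w*w))*A1*A2) + 2*(-(w*w))*A1*A2 - 2 * pairc ?X (tf g ?X) / (R*R*(-(w*w)))"
    unfolding id using RD by (simp add: field_simps)
  then have "Im (w*Z) = 0" using im unfolding ww R_def A1_def A2_def BB_def by simp
  then obtain n where n: "w*Z = of_int (d*n)" using O_real_w[OF d0 ZO] unfolding w_def by blast
  have P2: "2 * pairc ?X (tf g ?X) = of_int (r*r*d*(2*k + d*(2*a1*a2 - n)))"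
  proof -
    have mw: "-(w*w) = (of_int d :: complex)" using ww by simp
    show ?thesis unfolding id n mw R_def A1_def A2_def BB_def k_def
      apply (simp only: of_int_mult of_int_add of_int_diff of_int_power of_int_numeral)
      by algebra
  qed
  have Pr: "Re (pairc ?X (tf g ?X)) = real_of_int (r*r*d*(2*k + d*(2*a1*a2 - n))) / 2"
  proof -
    have "Re (2 * pairc ?X (tf g ?X)) = real_of_int (r*r*d*(2*k + d*(2*a1*a2 - n)))" unfolding P2 by simp
    then show ?thesis by simp
  qed
  have Qr: "Re (- det ?X) = real_of_int (r*r*d*k)"
  proof -
    have "det ?X = - of_int (r*r*d*k)" unfolding X mat2_det R_def A1_def A2_def BB_def k_def
      apply (simp only: of_int_mult of_int_add of_int_diff of_int_power of_int_numeral of_int_minus)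
      using ww by algebra
    then show ?thesis by simp
  qed
  have Cpos: "r*r*d > 0" using r0 d0 by (auto simp: zero_less_mult_iff linorder_neq_iff)
  show "\<not> (- Re (- det ?X) \<le> Re (pairc ?X (tf g ?X)) \<and> Re (pairc ?X (tf g ?X)) < Re (- det ?X))"
  proof
    assume H: "- Re (- det ?X) \<le> Re (pairc ?X (tf g ?X)) \<and> Re (pairc ?X (tf g ?X)) < Re (- det ?X)"
    have h1: "- (r*r*d*k) * 2 \<le> r*r*d*(2*k + d*(2*a1*a2 - n))" using H unfolding Pr Qr by linarith
    have h2: "r*r*d*(2*k + d*(2*a1*a2 - n)) < r*r*d*k*2" using H unfolding Pr Qr by linarith
    show False using int_arith[OF Cpos _ _ h1 h2] k0 kd unfolding k_def by simp
  qed
qed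


theorem proposition5p4:
  fixes d r s u v m c :: int
  assumes "d > 0" and "squarefree d"
    and "r > 0" and "r dvd d" and "s = - (d div r)"
    and "u * s - v * r = 1"
    and "0 < m" and "2 * m < d"
    and "0 < m\<^sup>2 - d * c" and "4 * (m\<^sup>2 - d * c) < d"
  shows "let \<sigma> = mat2 (sqrt_neg d) (of_int r) (of_int (v * r)) (of_int u * sqrt_neg d);
             A = mat2 (of_int d) (of_int m * sqrt_neg d) (- (of_int m * sqrt_neg d)) (of_int (d * c));
             A' = conj_transpose \<sigma> ** A ** \<sigma>
         in circle_matrix A' \<and> embedded_surface d A' \<and> orientable_surface d A'"
proof -
  note d0 = assms(1) and r0 = assms(3)
  define w where "w = sqrt_neg d"
  have ww: "w * w = - of_int d" unfolding w_def using w_sq d0 by simp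
  have ds: "d = - s * r" using assms(4,5) by auto
  define a1 where "a1 = -s + 2 * m * v + c * v^2 * r"
  define a2 where "a2 = r - 2 * m * u - s * c * u^2"
  define B where "B = s * r - m * u * s - m * v * r - s * r * c * u * v"
  have kk: "B^2 - d * a1 * a2 = m^2 - d * c"
    unfolding B_def a1_def a2_def ds using assms(6) by algebra
  let ?X = "mat2 (of_int (d * r * a1)) (of_int (r * B) * sqrt_neg d) (- (of_int (r * B) * sqrt_neg d)) (of_int (d * r * a2))"
  have dsC: "(of_int d :: complex) = - (of_int s * of_int r)" unfolding ds by simp
  have usC: "(of_int u * of_int s - of_int v * of_int r :: complex) = 1"
    using arg_cong[OF assms(6), of "of_int :: int \<Rightarrow> complex"] by simp
  have A': "conj_transpose (mat2 (sqrt_neg d) (of_int r) (of_int (v * r)) (of_int u * sqrt_neg d))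
        ** mat2 (of_int d) (of_int m * sqrt_neg d) (- (of_int m * sqrt_neg d)) (of_int (d * c))
        ** mat2 (sqrt_neg d) (of_int r) (of_int (v * r)) (of_int u * sqrt_neg d) = ?X"
    unfolding mat2_conj_transpose mat2_mult mat2_eq_iff w_def[symmetric] a1_def a2_def B_def
    apply (simp only: complex_cnj_mult complex_cnj_of_int w_cnj[of d, folded w_def] of_int_mult of_int_add of_int_diff
        of_int_power of_int_numeral of_int_minus)
    apply (intro conjI)
    using ww dsC usC by algebra+
  have hX: "cnj (of_int (d * r * a1)) = (of_int (d * r * a1) :: complex)" "cnj (- (of_int (r * B) * sqrt_neg d)) = of_int (r * B) * sqrt_neg d"
     "cnj (of_int (d * r * a2)) = (of_int (d * r * a2) :: complex)" by simp_all
  have detX: "det ?X = - of_int (r * r * d*(B^2 - d * a1 * a2))" unfolding mat2_det w_def[symmetric]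
      apply (simp only: of_int_mult of_int_add of_int_diff of_int_power of_int_numeral of_int_minus)
      using ww by algebra
  have k0: "B^2 - d * a1 * a2 > 0" and kd: "4*(B^2 - d * a1 * a2) < d" unfolding kk using assms(9,10) by auto
  have Cpos: "r * r * d > 0" using r0 d0 by simp
  define K where "K = r * r * d * (B^2 - d * a1 * a2)"
  have Kp: "K > 0" unfolding K_def using Cpos k0 by (rule mult_pos_pos)
  have dt: "Re (det ?X) < 0" unfolding detX K_def[symmetric] using Kp by simp
  have key: "keyprop d ?X" using KEY[OF d0 _ k0 kd] r0 by simp
  have "circle_matrix ?X" unfolding circle_matrix_def hermitian2_mat2 using hX dt by simp
  moreover have "embedded_surface d ?X" by (rule EMB[OF hX dt key])
  moreover have "orientable_surface d ?X" by (rule ORIENT[OF hX dt key])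
  ultimately show ?thesis unfolding Let_def A' by simp
qed


end
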